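(* Let $K$ be a field of characteristic zero, $m\in K[x,y]$ irreducible over $K(x)$ with $n=\deg_y(m)$, and $A=K(x)[y]/\langle m\rangle$ equipped with the derivation $'$ extending $d/dx$. Let $V=(v_1,\dots,v_n)$ be a $K(x)$-vector space basis of $A$ and let $a\in K[x]\setminus\{0\}$ and $B\in K[x]^{n\times n}$ be such that $aV'=BV$. Let $u\in K[x]\setminus\{0\}$ and let $\phi_V:K[x]^n\to u^{-2}K[x]^n$ be the $K$-linear map $\phi_V(p)=\frac{1}{u^2}\big(aup'-au'p+upB\big)$ (with $p$ a row vector). Let $N_V$ be the $K$-subspace of $K[x]^n$ spanned by all $e_ix^j$ ($1\le i\le n$, $j\in\mathbb N$) that are not the leading term of any element of $\operatorname{im}(\phi_V)\cap K[x]^n$. If $\deg_x(B)\le\deg_x(a)-1$, then $N_V$ is a finite-dimensional $K$-vector space.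
   Context: $e_1,\dots,e_n$ is the standard basis of $K^n$. An element $p\in K[x]^n$ is viewed as a polynomial in $x$ with coefficients in $K^n$: if $p=p^{(r)}x^r+\dots+p^{(0)}$ with $p^{(i)}\in K^n$, $p^{(r)}\neq0$, then $\deg_x(p)=r$ and its leading term is $p^{(r)}x^r$; "$e_ix^j$ is a leading term" means it equals such a $p^{(r)}x^r$. Likewise $\deg_x(B)$ is the maximum degree of the entries of $B$. *)

theory Defs
  imports "HOL-Computational_Algebra.Computational_Algebra"
          "HOL-Library.Function_Algebras"
begin

text \<open>K(x) is modelled as the fraction field 'a poly fract of K[x];
 K[x,y] as 'a poly poly (outer variable y, coefficients in K[x]);
 K(x)[y] as ('a poly fract) poly.\<close>

definition fderiv :: "'a::field_char_0 poly fract \<Rightarrow> 'a poly fract" where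
  "fderiv r = (let (p, q) = (SOME (p, q). q \<noteq> 0 \<and> r = Fract p q) in
      Fract (pderiv p * q - p * pderiv q) (q ^ 2))"

definition liftF :: "'a::field_char_0 poly poly \<Rightarrow> 'a poly fract poly" where
  "liftF m = map_poly to_fract m"

definition dx_poly :: "'a::field_char_0 poly poly \<Rightarrow> 'a poly fract poly" where
  "dx_poly m = map_poly (\<lambda>c. to_fract (pderiv c)) m"

text \<open>The derivation on K(x)[y] extending d/dx and sending y to w:
  D_w f = (coefficientwise d/dx of f) + (d f / d y) * w.
  On A = K(x)[y]/<m> it is the derivation extending d/dx iff
  m_x + m_y * w = 0 in A.\<close>
definition Dw :: "'a::field_char_0 poly fract poly \<Rightarrow> 'a poly fract poly \<Rightarrow> 'a poly fract poly" where
  "Dw w f = map_poly fderiv f + pderiv f * w"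

text \<open>Congruence modulo m in K(x)[y], i.e. equality in A.\<close>
definition congA :: "'a::field_char_0 poly fract poly \<Rightarrow> 'a poly fract poly \<Rightarrow> 'a poly fract poly \<Rightarrow> bool" where
  "congA M f g \<longleftrightarrow> M dvd (f - g)"

text \<open>K[x]^n as functions nat => K[x] vanishing from index n on.\<close>
definition polyvecs :: "nat \<Rightarrow> (nat \<Rightarrow> 'a::field_char_0 poly) set" where
  "polyvecs n = {p. \<forall>i\<ge>n. p i = 0}"

definition phiV :: "'a::field_char_0 poly \<Rightarrow> (nat \<Rightarrow> nat \<Rightarrow> 'a poly) \<Rightarrow> 'a poly \<Rightarrow> nat
    \<Rightarrow> (nat \<Rightarrow> 'a poly) \<Rightarrow> (nat \<Rightarrow> 'a poly fract)" where
  "phiV a B u n p = (\<lambda>j. if j < n then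
      to_fract (a * u * pderiv (p j) - a * pderiv u * p j + u * (\<Sum>i<n. p i * B i j))
        / to_fract (u ^ 2)
    else 0)"

definition imV_poly :: "'a::field_char_0 poly \<Rightarrow> (nat \<Rightarrow> nat \<Rightarrow> 'a poly) \<Rightarrow> 'a poly \<Rightarrow> nat
    \<Rightarrow> (nat \<Rightarrow> 'a poly) set" where
  "imV_poly a B u n = {q \<in> polyvecs n. \<exists>p\<in>polyvecs n. phiV a B u n p = (\<lambda>j. to_fract (q j))}"

definition vdeg :: "nat \<Rightarrow> (nat \<Rightarrow> 'a::zero poly) \<Rightarrow> nat" where
  "vdeg n q = Max ((\<lambda>i. degree (q i)) ` {..<n})"

definition is_leading_term :: "nat \<Rightarrow> (nat \<Rightarrow> 'a::field_char_0 poly) \<Rightarrow> nat \<Rightarrow> nat \<Rightarrow> bool" where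
  "is_leading_term n q i j \<longleftrightarrow> q \<in> polyvecs n \<and> q \<noteq> 0 \<and> vdeg n q = j \<and>
      (\<forall>k<n. coeff (q k) j = (if k = i then 1 else 0))"

definition emon :: "nat \<Rightarrow> nat \<Rightarrow> (nat \<Rightarrow> 'a::field_char_0 poly)" where
  "emon i j = (\<lambda>k. if k = i then monom 1 j else 0)"

definition kscale :: "'a::field_char_0 \<Rightarrow> (nat \<Rightarrow> 'a poly) \<Rightarrow> (nat \<Rightarrow> 'a poly)" where
  "kscale c p = (\<lambda>i. smult c (p i))"

definition NV :: "'a::field_char_0 poly \<Rightarrow> (nat \<Rightarrow> nat \<Rightarrow> 'a poly) \<Rightarrow> 'a poly \<Rightarrow> nat
    \<Rightarrow> (nat \<Rightarrow> 'a poly) set" where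
  "NV a B u n = module.span kscale
     {emon i j | i j. i < n \<and> \<not> (\<exists>q\<in>imV_poly a B u n. is_leading_term n q i j)}"

definition fin_dim_K :: "(nat \<Rightarrow> 'a::field_char_0 poly) set \<Rightarrow> bool" where
  "fin_dim_K S \<longleftrightarrow> (\<exists>F. finite F \<and> module.span kscale F = S)"

end

theory Submission imports Defs "Jordan_Normal_Form.Char_Poly" "Jordan_Normal_Form.Determinant"
begin
lemma mat_inv_large:
  fixes C :: "nat \<Rightarrow> nat \<Rightarrow> 'a::field_char_0" and c :: 'a
  assumes c: "c \<noteq> 0"
  shows "\<exists>k0. \<forall>k\<ge>k0. \<exists>R::nat\<Rightarrow>nat\<Rightarrow>'a. \<forall>i<n. \<forall>j<n.
     (\<Sum>l<n. R i l * (of_nat k * c * (if l = j then 1 else 0) + C l j)) = (if i = j then 1 else 0)"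
proof -
  define A :: "'a mat" where "A = mat n n (\<lambda>(l,j). - C l j / c)"
  have A: "A \<in> carrier_mat n n" unfolding A_def by simp
  have cp: "char_poly A \<noteq> 0" using degree_monic_char_poly[OF A] by auto
  have "finite {x. poly (char_poly A) x = 0}" using poly_roots_finite[OF cp] .
  hence fin: "finite {k::nat. poly (char_poly A) (of_nat k) = 0}"
  proof -
    assume h: "finite {x. poly (char_poly A) x = 0}"
    have "{k::nat. poly (char_poly A) (of_nat k) = 0} = of_nat -` {x. poly (char_poly A) x = 0}" by auto
    thus ?thesis using finite_vimageI[OF h, of "of_nat :: nat \<Rightarrow> 'a"] by (simp add: inj_on_def)
  qed
  then obtain k0 where k0: "\<And>k. poly (char_poly A) (of_nat k) = 0 \<Longrightarrow> k < k0"
    unfolding finite_nat_set_iff_bounded by blast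
  show ?thesis
  proof (rule exI[of _ k0], intro allI impI)
    fix k assume kk: "k0 \<le> k"
    define M :: "'a mat" where "M = mat n n (\<lambda>(l,j). of_nat k * c * (if l = j then 1 else 0) + C l j)"
    have M: "M \<in> carrier_mat n n" unfolding M_def by simp
    have MA: "M = c \<cdot>\<^sub>m (- (char_matrix A (of_nat k)))"
      by (rule eq_matI) (auto simp: M_def A_def char_matrix_def c field_simps)
    have "det M = c ^ n * poly (char_poly A) (of_nat k)"
      unfolding MA char_poly_matrix[OF A] using A by (simp add: char_matrix_def)
    moreover have "poly (char_poly A) (of_nat k) \<noteq> 0" using k0[of k] kk by auto
    ultimately have "det M \<noteq> 0" using c by simp
    from det_non_zero_imp_unit[OF M this, unfolded Units_def, of "()"]
    obtain Bi where Bi: "Bi \<in> carrier_mat n n" and BA: "Bi * M = 1\<^sub>m n"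
      by (auto simp: ring_mat_def)
    show "\<exists>R::nat\<Rightarrow>nat\<Rightarrow>'a. \<forall>i<n. \<forall>j<n.
     (\<Sum>l<n. R i l * (of_nat k * c * (if l = j then 1 else 0) + C l j)) = (if i = j then 1 else 0)"
    proof (rule exI[of _ "\<lambda>i l. Bi $$ (i,l)"], intro allI impI)
      fix i j assume i: "i < n" and j: "j < n"
      have "(Bi * M) $$ (i,j) = (if i = j then 1 else 0)" using BA i j by simp
      moreover have "(Bi * M) $$ (i,j) = (\<Sum>l<n. Bi $$ (i,l) * (of_nat k * c * (if l = j then 1 else 0) + C l j))"
        using Bi M i j by (simp add: scalar_prod_def M_def lessThan_atLeast0)
      ultimately show "(\<Sum>l<n. Bi $$ (i,l) * (of_nat k * c * (if l = j then 1 else 0) + C l j)) = (if i = j then 1 else 0)" by simp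
    qed
  qed
qed

lemma key_vec:
  fixes a u :: "'a::field_char_0 poly" and B :: "nat \<Rightarrow> nat \<Rightarrow> 'a poly" and r :: "nat \<Rightarrow> 'a"
  assumes a_nz: "a \<noteq> 0" and u_nz: "u \<noteq> 0" and i: "i < n" and k: "1 \<le> k"
    and degB: "\<forall>i<n. \<forall>j<n. B i j \<noteq> 0 \<longrightarrow> degree (B i j) + 1 \<le> degree a"
    and r: "\<forall>j<n. (\<Sum>l<n. r l * (of_nat k * lead_coeff a * (if l = j then 1 else 0)
               + coeff (B l j) (degree a - 1))) = (if i = j then 1 else 0)"
  shows "\<exists>q\<in>imV_poly a B u n. is_leading_term n q i (degree a + k - 1)"
proof -
  define d where "d = degree a"
  define t where "t = d + k - 1"
  define Q where "Q = (\<lambda>l. if l < n then monom (r l) k else 0)"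
  define p where "p = (\<lambda>l. u * Q l)"
  define q where "q = (\<lambda>j. if j < n then monom (of_nat k * r j) (k - 1) * a + (\<Sum>l<n. monom (r l) k * B l j) else 0)"
  have pv: "p \<in> polyvecs n" unfolding p_def Q_def polyvecs_def by auto
  have qv: "q \<in> polyvecs n" unfolding q_def polyvecs_def by auto
  have phi: "phiV a B u n p = (\<lambda>j. to_fract (q j))"
  proof
    fix j
    show "phiV a B u n p j = to_fract (q j)"
    proof (cases "j < n")
      case False thus ?thesis by (simp add: phiV_def q_def)
    next
      case True
      have Qj: "Q j = monom (r j) k" using True by (simp add: Q_def)
      have sumeq: "(\<Sum>l<n. p l * B l j) = u * (\<Sum>l<n. monom (r l) k * B l j)"
        by (simp add: p_def Q_def sum_distrib_left mult.assoc)
      have "a * u * pderiv (p j) - a * pderiv u * p j + u * (\<Sum>l<n. p l * B l j)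
            = u ^ 2 * q j"
        unfolding sumeq using True
        by (simp add: p_def Qj q_def pderiv_mult pderiv_monom algebra_simps power2_eq_square)
      hence "phiV a B u n p j = to_fract (u ^ 2 * q j) / to_fract (u ^ 2)"
        using True by (simp add: phiV_def)
      also have "\<dots> = to_fract (q j)" using u_nz by simp
      finally show ?thesis .
    qed
  qed
  have coefq: "coeff (q j) (t) = (if i = j then 1 else 0)" if j: "j < n" for j
  proof -
    have c1: "coeff (monom (of_nat k * r j) (k - 1) * a) (t) = of_nat k * r j * lead_coeff a"
    proof -
      obtain k' where k': "k = Suc k'" using k by (cases k) auto
      show ?thesis by (simp add: coeff_monom_mult k' d_def[symmetric] t_def)
    qed
    have c2: "coeff (monom (r l) k * B l j) (t) = r l * coeff (B l j) (degree a - 1)" if l: "l < n" for l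
    proof (cases "B l j = 0")
      case True thus ?thesis by simp
    next
      case False
      hence "d \<ge> 1" using degB l j by (auto simp: d_def)
      thus ?thesis by (simp add: coeff_monom_mult d_def t_def)
    qed
    have "coeff (q j) (t) = of_nat k * r j * lead_coeff a + (\<Sum>l<n. r l * coeff (B l j) (degree a - 1))"
      using j c1 c2 by (simp add: q_def coeff_sum)
    also have "\<dots> = (\<Sum>l<n. r l * (of_nat k * lead_coeff a * (if l = j then 1 else 0)
               + coeff (B l j) (degree a - 1)))"
    proof -
      have e1: "(\<Sum>l<n. r l * (of_nat k * lead_coeff a * (if l = j then 1 else 0)
               + coeff (B l j) (degree a - 1))) = (\<Sum>l<n. (if l = j then r l * (of_nat k * lead_coeff a) else 0))
               + (\<Sum>l<n. r l * coeff (B l j) (degree a - 1))"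
        by (subst sum.distrib[symmetric], rule sum.cong) (auto simp: distrib_left)
      have e2: "(\<Sum>l<n. (if l = j then r l * (of_nat k * lead_coeff a) else 0)) = r j * (of_nat k * lead_coeff a)"
        using j by (simp add: sum.delta)
      show ?thesis unfolding e1 e2 by (simp add: mult_ac)
    qed
    also have "\<dots> = (if i = j then 1 else 0)" using r j by simp
    finally show ?thesis .
  qed
  have degq: "degree (q j) \<le> t" for j
  proof (cases "j < n")
    case False thus ?thesis by (simp add: q_def)
  next
    case True
    have d1: "degree (monom (of_nat k * r j) (k - 1) * a) \<le> t"
      using degree_mult_le[of "monom (of_nat k * r j) (k - 1)" a] degree_monom_le[of "of_nat k * r j" "k - 1"] k
      by (simp add: d_def t_def)
    have d2: "degree (monom (r l) k * B l j) \<le> t" if l: "l \<in> {..<n}" for l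
    proof (cases "B l j = 0")
      case True thus ?thesis by simp
    next
      case False
      hence "degree (B l j) + 1 \<le> d" using degB l True by (auto simp: d_def)
      thus ?thesis using degree_mult_le[of "monom (r l) k" "B l j"] degree_monom_le[of "r l" k] by (simp add: t_def)
    qed
    have "degree (\<Sum>l<n. monom (r l) k * B l j) \<le> t"
      by (rule degree_sum_le) (use d2 in auto)
    thus ?thesis using True d1 by (simp add: q_def degree_add_le)
  qed
  have qi: "degree (q i) = t"
  proof (rule antisym[OF degq])
    show "t \<le> degree (q i)" using coefq[OF i] by (intro le_degree) simp
  qed
  have vd: "vdeg n q = t"
    unfolding vdeg_def
    by (rule Max_eqI) (use degq qi i in auto)
  have qnz: "q \<noteq> 0"
  proof
    assume "q = 0" hence "q i = 0" by simp
    thus False using coefq[OF i] by simp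
  qed
  have "q \<in> imV_poly a B u n" unfolding imV_poly_def using qv pv phi by auto
  moreover have "is_leading_term n q i (degree a + k - 1)"
    unfolding is_leading_term_def using qv qnz vd coefq by (simp add: d_def t_def)
  ultimately show ?thesis by blast
qed

hide_const (open) Module.module.smult

theorem proposition14:
  fixes m :: "'a::field_char_0 poly poly"
    and n :: nat
    and v :: "nat \<Rightarrow> 'a poly fract poly"
    and a u :: "'a poly"
    and B :: "nat \<Rightarrow> nat \<Rightarrow> 'a poly"
  assumes irr: "irreducible (liftF m)"
    and n_def: "n = degree m"
    and basis: "\<forall>f. \<exists>!c :: nat \<Rightarrow> 'a poly fract. (\<forall>i\<ge>n. c i = 0) \<and>
                   congA (liftF m) f (\<Sum>i<n. smult (c i) (v i))"
    and a_nz: "a \<noteq> 0"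
    and deriv_eq: "\<exists>w. congA (liftF m) (dx_poly m + pderiv (liftF m) * w) 0 \<and>
                   (\<forall>i<n. congA (liftF m) (smult (to_fract a) (Dw w (v i)))
                            (\<Sum>j<n. smult (to_fract (B i j)) (v j)))"
    and u_nz: "u \<noteq> 0"
    and degB: "\<forall>i<n. \<forall>j<n. B i j \<noteq> 0 \<longrightarrow> degree (B i j) + 1 \<le> degree a"
  shows "fin_dim_K (NV a B u n)"
proof -
  have lc: "lead_coeff a \<noteq> 0" using a_nz by simp
  obtain k0 where k0: "\<And>k. k \<ge> k0 \<Longrightarrow> \<exists>R::nat\<Rightarrow>nat\<Rightarrow>'a. \<forall>i<n. \<forall>j<n.
     (\<Sum>l<n. R i l * (of_nat k * lead_coeff a * (if l = j then 1 else 0) + coeff (B l j) (degree a - 1)))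
        = (if i = j then 1 else 0)"
    using mat_inv_large[OF lc, of n "\<lambda>l j. coeff (B l j) (degree a - 1)"] by blast
  define J where "J = degree a + k0 + 1"
  have lead: "\<exists>q\<in>imV_poly a B u n. is_leading_term n q i j" if i: "i < n" and j: "J \<le> j" for i j
  proof -
    define k where "k = j + 1 - degree a"
    have kk: "k \<ge> k0" "1 \<le> k" and jk: "j = degree a + k - 1" using j by (auto simp: J_def k_def)
    obtain R where R: "\<forall>i<n. \<forall>j<n.
     (\<Sum>l<n. R i l * (of_nat k * lead_coeff a * (if l = j then 1 else 0) + coeff (B l j) (degree a - 1)))
        = (if i = j then 1 else 0)" using k0[OF kk(1)] by blast
    show ?thesis unfolding jk
      by (rule key_vec[OF a_nz u_nz i kk(2) degB, of "R i"]) (use R i in auto)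
  qed
  define G where "G = {(emon i j :: nat \<Rightarrow> 'a poly) | i j. i < n \<and> \<not> (\<exists>q\<in>imV_poly a B u n. is_leading_term n q i j)}"
  have "G \<subseteq> (\<lambda>(i,j). emon i j) ` ({..<n} \<times> {..<J})"
  proof
    fix x assume "x \<in> G"
    then obtain i j where x: "x = emon i j" "i < n" "\<not> (\<exists>q\<in>imV_poly a B u n. is_leading_term n q i j)"
      unfolding G_def by blast
    hence "j < J" using lead[of i j] by force
    thus "x \<in> (\<lambda>(i,j). emon i j) ` ({..<n} \<times> {..<J})" using x by force
  qed
  hence "finite G" by (rule finite_subset) auto
  moreover have "Modules.module.span kscale G = (NV a B u n :: (nat \<Rightarrow> 'a poly) set)" unfolding NV_def G_def by (rule refl)
  ultimately show ?thesis unfolding fin_dim_K_def by blast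
qed
end
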